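(* Let $\omega\in\mathbb C\setminus\{0\}$ be fixed. There is exactly one pair of series $\mathsf W(x)\in\mathbb C[x][[t]]$ and $\mathsf H(x,y)\in\mathbb C[x,y][[t]]$ satisfying \[ \mathsf W(x)=x^2t\,\mathsf W(x)^2+\omega x t\,\mathsf H(x,0)+\omega^{-1}xt\,\mathsf H(0,x)+1 \] and \[ \mathsf H(x,y)=\mathsf W(x)\mathsf W(y)+\frac{\omega^{-1}}{y}\big(\mathsf H(x,y)-\mathsf H(x,0)\big)+\frac{\omega}{x}\big(\mathsf H(x,y)-\mathsf H(0,y)\big). \]
   Context: Here $\mathbb C[x][[t]]$ denotes formal power series in $t$ whose coefficients are polynomials in $x$ (similarly for $\mathbb C[x,y][[t]]$). The expressions $(\mathsf H(x,y)-\mathsf H(x,0))/y$ and $(\mathsf H(x,y)-\mathsf H(0,y))/x$ are again in $\mathbb C[x,y][[t]]$. *)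

theory Defs
  imports "HOL-Computational_Algebra.Polynomial" "HOL-Computational_Algebra.Formal_Power_Series"
begin

(* C[x][[t]]  = complex poly fps        (variable x is the poly variable)
   C[x,y][[t]] = complex poly poly fps   (outer poly variable y, inner poly variable x) *)

definition fps_cmap :: "('a::zero \<Rightarrow> 'b::zero) \<Rightarrow> 'a fps \<Rightarrow> 'b fps" where
  "fps_cmap f F = Abs_fps (\<lambda>n. f (fps_nth F n))"

definition sub_y0 :: "complex poly poly \<Rightarrow> complex poly" where
  "sub_y0 p = coeff p 0"

(* H(0,y) : substitute x = 0 (result is a polynomial in y, returned as a univariate poly) *)
definition sub_x0 :: "complex poly poly \<Rightarrow> complex poly" where
  "sub_x0 p = map_poly (\<lambda>c. poly c 0) p"

definition as_x :: "complex poly \<Rightarrow> complex poly poly" where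
  "as_x p = [:p:]"
definition as_y :: "complex poly \<Rightarrow> complex poly poly" where
  "as_y p = map_poly (\<lambda>c. [:c:]) p"

definition divY :: "complex poly poly \<Rightarrow> complex poly poly" where
  "divY p = (p - as_x (sub_y0 p)) div [:0, 1:]"

definition divX :: "complex poly poly \<Rightarrow> complex poly poly" where
  "divX p = (p - as_y (sub_x0 p)) div [:[:0, 1:]:]"

end

theory Submission imports Defs begin

definition dtail :: "'a::idom_divide poly \<Rightarrow> 'a poly" where
  "dtail c = (c - [:coeff c 0:]) div [:0, 1:]"

lemma x_mult: "[:0, 1:] * (q :: 'a::comm_semiring_1 poly) = pCons 0 q"
  by (simp add: mult_pCons_left smult_one)

lemma dtail_pCons: "dtail (pCons a q) = q"
proof -
  have "pCons a q - [:coeff (pCons a q) 0:] = [:0, 1:] * q"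
    by (simp add: x_mult)
  then show ?thesis unfolding dtail_def
    by (metis nonzero_mult_div_cancel_left pCons_eq_0_iff zero_neq_one)
qed

lemma dtail_coeff: "coeff (dtail c) j = coeff c (Suc j)"
  by (cases c) (simp add: dtail_pCons)

lemma dtail_mult: "[:0, 1:] * dtail c = c - [:coeff c 0:]"
  by (cases c) (simp add: dtail_pCons x_mult)

lemma divY_coeff: "coeff (divY p) i = coeff p (Suc i)"
proof -
  have "divY p = dtail p" unfolding divY_def dtail_def as_x_def sub_y0_def ..
  then show ?thesis by (simp add: dtail_coeff)
qed

lemma divX_eq: "divX p = map_poly dtail p"
proof -
  have d0: "dtail (0::complex poly) = 0" by (simp add: dtail_def)
  have "p - as_y (sub_x0 p) = [:[:0, 1:]:] * map_poly dtail p"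
    by (rule poly_eqI) (simp add: as_y_def sub_x0_def coeff_map_poly d0 dtail_mult[symmetric] x_mult poly_0_coeff_0)
  then show ?thesis unfolding divX_def
    by (metis nonzero_mult_div_cancel_left pCons_eq_0_iff zero_neq_one)
qed

lemma divX_coeff: "coeff (coeff (divX p) i) j = coeff (coeff p i) (Suc j)"
proof -
  have d0: "dtail (0::complex poly) = 0" by (simp add: dtail_def)
  show ?thesis by (simp add: divX_eq coeff_map_poly d0 dtail_coeff)
qed


definition NN :: "complex \<Rightarrow> complex \<Rightarrow> complex poly poly \<Rightarrow> complex poly poly" where
  "NN a b p = [:[:a:]:] * divY p + [:[:b:]:] * divX p"

lemma NN_coeff: "coeff (coeff (NN a b p) i) j = a * coeff (coeff p (Suc i)) j + b * coeff (coeff p i) (Suc j)"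
  by (simp add: NN_def divY_coeff divX_coeff)

lemma NN_add: "NN a b (p + q) = NN a b p + NN a b q"
  by (rule poly_eqI, rule poly_eqI) (simp add: NN_coeff algebra_simps)

lemma NN_diff: "NN a b (p - q) = NN a b p - NN a b q"
  by (rule poly_eqI, rule poly_eqI) (simp add: NN_coeff algebra_simps)

lemma NN_0: "NN a b 0 = 0"
  by (rule poly_eqI, rule poly_eqI) (simp add: NN_coeff)

lemma NN_sum: "NN a b (\<Sum>k<(n::nat). f k) = (\<Sum>k<n. NN a b (f k))"
  by (induction n) (simp_all add: NN_0 NN_add)

definition vanish :: "nat \<Rightarrow> complex poly poly \<Rightarrow> bool" where
  "vanish D p = (\<forall>i j. D \<le> i + j \<longrightarrow> coeff (coeff p i) j = 0)"

lemma vanish_NN: "vanish (Suc D) p \<Longrightarrow> vanish D (NN a b p)"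
  unfolding vanish_def by (simp add: NN_coeff)

lemma vanish_pow: "vanish (k + D) p \<Longrightarrow> vanish D ((NN a b ^^ k) p)"
proof (induction k arbitrary: D)
  case 0 then show ?case by simp
next
  case (Suc k)
  then have "vanish (k + Suc D) p" by simp
  then have "vanish (Suc D) ((NN a b ^^ k) p)" using Suc.IH by blast
  then show ?case by (simp add: vanish_NN)
qed

lemma vanish_0: "vanish 0 p \<Longrightarrow> p = 0"
  unfolding vanish_def by (auto intro!: poly_eqI)

definition bnd :: "complex poly poly \<Rightarrow> nat" where
  "bnd p = Suc (degree p + (\<Sum>i\<le>degree p. degree (coeff p i)))"

lemma vanish_bnd: "vanish (bnd p) p"
  unfolding vanish_def
proof (intro allI impI)
  fix i j assume h: "bnd p \<le> i + j"
  show "coeff (coeff p i) j = 0"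
  proof (cases "i \<le> degree p")
    case True
    have "degree (coeff p i) \<le> (\<Sum>i\<le>degree p. degree (coeff p i))"
      by (rule member_le_sum) (use True in auto)
    then have "degree (coeff p i) < j" using h True unfolding bnd_def by linarith
    then show ?thesis by (simp add: coeff_eq_0)
  next
    case False then show ?thesis by (simp add: coeff_eq_0)
  qed
qed

lemma NN_pow_bnd: "(NN a b ^^ bnd p) p = 0"
  using vanish_pow[of "bnd p" 0 p a b] vanish_bnd[of p] vanish_0 by simp

definition SS :: "complex \<Rightarrow> complex \<Rightarrow> complex poly poly \<Rightarrow> complex poly poly" where
  "SS a b p = (\<Sum>k<bnd p. (NN a b ^^ k) p)"

lemma SS_sol: "SS a b p = p + NN a b (SS a b p)"
proof -
  have "NN a b (SS a b p) = (\<Sum>k<bnd p. (NN a b ^^ Suc k) p)"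
    by (simp add: SS_def NN_sum)
  moreover have "(\<Sum>k<Suc (bnd p). (NN a b ^^ k) p) = p + (\<Sum>k<bnd p. (NN a b ^^ Suc k) p)"
    by (subst sum.lessThan_Suc_shift) simp
  moreover have "(\<Sum>k<Suc (bnd p). (NN a b ^^ k) p) = SS a b p"
    by (simp add: SS_def NN_pow_bnd)
  ultimately show ?thesis by simp
qed

lemma SS_unique: fixes a b :: complex and h p :: "complex poly poly" assumes "h = p + NN a b h" shows "h = SS a b p"
proof -
  define d where "d = h - SS a b p"
  have dd: "d = NN a b d" unfolding d_def NN_diff
    using assms SS_sol[of a b p] by (metis add_diff_cancel_left)
  have "\<And>k. (NN a b ^^ k) d = d"
  proof -
    fix k show "(NN a b ^^ k) d = d" by (induction k) (simp_all, use dd in simp)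
  qed
  then have "d = 0" using NN_pow_bnd[where p=d and a=a and b=b] by metis
  then show ?thesis by (simp add: d_def)
qed

lemma SS_iff: "h = p + NN a b h \<longleftrightarrow> h = SS a b p"
  using SS_unique SS_sol by blast


definition agree :: "nat \<Rightarrow> 'a fps \<Rightarrow> 'a fps \<Rightarrow> bool" where
  "agree k F G = (\<forall>m<k. fps_nth F m = fps_nth G m)"

lemma agree_refl: "agree k F F" by (simp add: agree_def)

lemma agree_mono: "agree k F G \<Longrightarrow> j \<le> k \<Longrightarrow> agree j F G"
  by (simp add: agree_def)

lemma agree_add: "agree k F F' \<Longrightarrow> agree k G G' \<Longrightarrow> agree k (F + G) (F' + G')"
  by (simp add: agree_def)

lemma agree_mult: "agree k F F' \<Longrightarrow> agree k G G' \<Longrightarrow> agree k (F * G) (F' * (G' :: 'a::comm_semiring_1 fps))"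
  unfolding agree_def fps_mult_nth by (auto intro!: sum.cong)

lemma agree_X: "agree k F F' \<Longrightarrow> agree (Suc k) (fps_X * F) (fps_X * (F' :: 'a::comm_semiring_1 fps))"
  unfolding agree_def by auto

lemma fps_cmap_nth: "fps_nth (fps_cmap f F) n = f (fps_nth F n)"
  by (simp add: fps_cmap_def)

lemma agree_cmap: "agree k F F' \<Longrightarrow> agree k (fps_cmap f F) (fps_cmap f F')"
  by (simp add: agree_def fps_cmap_nth)

lemma fps_fix:
  fixes \<Phi> :: "'a::zero fps \<Rightarrow> 'a fps"
  assumes loc: "\<And>F G n. agree n F G \<Longrightarrow> fps_nth (\<Phi> F) n = fps_nth (\<Phi> G) n"
  shows "\<exists>!W. W = \<Phi> W"
proof -
  have ex: "\<exists>W. W = \<Phi> W"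
  proof -
  define f where "f k = (\<Phi> ^^ k) 0" for k
  have fS: "f (Suc k) = \<Phi> (f k)" for k by (simp add: f_def)
  have step: "agree k (f k) (f (Suc k))" for k
  proof (induction k)
    case 0 then show ?case by (simp add: agree_def)
  next
    case (Suc k)
    show ?case unfolding agree_def
    proof (intro allI impI)
      fix m assume "m < Suc k"
      then have "agree m (f k) (f (Suc k))" using agree_mono[OF Suc.IH] by simp
      then show "fps_nth (f (Suc k)) m = fps_nth (f (Suc (Suc k))) m" unfolding fS by (rule loc)
    qed
  qed
  have stab: "agree k (f k) (f (k + j))" for k j
  proof (induction j)
    case 0 then show ?case by (simp add: agree_refl)
  next
    case (Suc j)
    have "agree k (f (k + j)) (f (Suc (k + j)))" using agree_mono[OF step[of "k+j"]] by simp
    then show ?case using Suc.IH unfolding agree_def by simp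
  qed
  define W where "W = Abs_fps (\<lambda>n. fps_nth (f (Suc n)) n)"
  have "agree n W (f (Suc n))" for n
    unfolding agree_def W_def
  proof (intro allI impI)
    fix m assume "m < n"
    have st: "agree (Suc m) (f (Suc m)) (f (Suc m + (n - m)))" by (rule stab)
    have "Suc m + (n - m) = Suc n" using \<open>m < n\<close> by simp
    with st have "fps_nth (f (Suc m)) m = fps_nth (f (Suc n)) m" unfolding agree_def by simp
    then show "fps_nth (Abs_fps (\<lambda>n. fps_nth (f (Suc n)) n)) m = fps_nth (f (Suc n)) m"
      by simp
  qed
  then have "fps_nth (\<Phi> W) n = fps_nth (f (Suc (Suc n))) n" for n using loc fS by (simp only: fS)
  also have "fps_nth (f (Suc (Suc n))) n = fps_nth W n" for n
    using step[of "Suc n"] by (simp add: agree_def W_def)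
  finally have "W = \<Phi> W" by (simp add: fps_eq_iff)
  then show ?thesis by blast
  qed
  have un: "V = W" if V: "V = \<Phi> V" and W: "W = \<Phi> W" for V W
  proof -
    have "fps_nth V n = fps_nth W n" for n
    proof (induction n rule: less_induct)
      case (less n)
      then have "agree n V W" by (simp add: agree_def)
      then have e: "fps_nth (\<Phi> V) n = fps_nth (\<Phi> W) n" by (rule loc)
      have "fps_nth V n = fps_nth (\<Phi> V) n" using V by (rule arg_cong)
      also have "\<dots> = fps_nth (\<Phi> W) n" by (rule e)
      also have "\<dots> = fps_nth W n" using W[symmetric] by (rule arg_cong)
      finally show ?case .
    qed
    then show "V = W" by (simp add: fps_eq_iff)
  qed
  from ex un show ?thesis by blast
qed


theorem mainTheorem3:
  fixes \<omega> :: complex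
  assumes "\<omega> \<noteq> 0"
  shows "\<exists>!(W, H). (W :: complex poly fps) =
             fps_const [:0, 0, 1:] * fps_X * W ^ 2
           + fps_const (smult \<omega> [:0, 1:]) * fps_X * fps_cmap sub_y0 H
           + fps_const (smult (inverse \<omega>) [:0, 1:]) * fps_X * fps_cmap sub_x0 H
           + 1
         \<and> (H :: complex poly poly fps) =
             fps_cmap as_x W * fps_cmap as_y W
           + fps_const [:[:inverse \<omega>:]:] * fps_cmap divY H
           + fps_const [:[:\<omega>:]:] * fps_cmap divX H"
proof -
  define Hof where "Hof W = fps_cmap (SS (inverse \<omega>) \<omega>) (fps_cmap as_x W * fps_cmap as_y W)"
    for W :: "complex poly fps"
  have Hiff: "(H = fps_cmap as_x W * fps_cmap as_y W
           + fps_const [:[:inverse \<omega>:]:] * fps_cmap divY H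
           + fps_const [:[:\<omega>:]:] * fps_cmap divX H) \<longleftrightarrow> H = Hof W" for W H
  proof -
    have "(H = fps_cmap as_x W * fps_cmap as_y W
           + fps_const [:[:inverse \<omega>:]:] * fps_cmap divY H
           + fps_const [:[:\<omega>:]:] * fps_cmap divX H) \<longleftrightarrow>
       (\<forall>n. fps_nth H n = fps_nth (fps_cmap as_x W * fps_cmap as_y W) n + NN (inverse \<omega>) \<omega> (fps_nth H n))"
      by (simp add: fps_eq_iff fps_cmap_nth NN_def add.assoc)
    also have "\<dots> \<longleftrightarrow> (\<forall>n. fps_nth H n = SS (inverse \<omega>) \<omega> (fps_nth (fps_cmap as_x W * fps_cmap as_y W) n))"
      by (simp add: SS_iff)
    also have "\<dots> \<longleftrightarrow> H = Hof W" by (simp add: fps_eq_iff Hof_def fps_cmap_nth)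
    finally show ?thesis .
  qed
  define \<Phi> where "\<Phi> W = fps_const [:0, 0, 1:] * fps_X * W ^ 2
           + fps_const (smult \<omega> [:0, 1:]) * fps_X * fps_cmap sub_y0 (Hof W)
           + fps_const (smult (inverse \<omega>) [:0, 1:]) * fps_X * fps_cmap sub_x0 (Hof W)
           + 1" for W
  have loc: "fps_nth (\<Phi> W) n = fps_nth (\<Phi> V) n" if ag: "agree n W V" for W V n
  proof -
    have aH: "agree n (Hof W) (Hof V)" unfolding Hof_def
      by (intro agree_cmap agree_mult ag)
    have a2: "agree n (W ^ 2) (V ^ 2)" unfolding power2_eq_square
      by (intro agree_mult ag)
    have "agree (Suc n) (\<Phi> W) (\<Phi> V)" unfolding \<Phi>_def mult.assoc
      by (intro agree_add agree_mult agree_refl agree_X agree_cmap aH a2)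
    then show ?thesis by (simp add: agree_def)
  qed
  obtain W0 where W0: "W0 = \<Phi> W0" and uq: "\<And>V. V = \<Phi> V \<Longrightarrow> V = W0"
    using fps_fix[of \<Phi>, OF loc] by blast
  show ?thesis
  proof (rule ex1I[of _ "(W0, Hof W0)"])
    show "case (W0, Hof W0) of (W, H) \<Rightarrow> W =
             fps_const [:0, 0, 1:] * fps_X * W ^ 2
           + fps_const (smult \<omega> [:0, 1:]) * fps_X * fps_cmap sub_y0 H
           + fps_const (smult (inverse \<omega>) [:0, 1:]) * fps_X * fps_cmap sub_x0 H
           + 1
         \<and> H =
             fps_cmap as_x W * fps_cmap as_y W
           + fps_const [:[:inverse \<omega>:]:] * fps_cmap divY H
           + fps_const [:[:\<omega>:]:] * fps_cmap divX H"
      unfolding prod.case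
    proof
      show "W0 = fps_const [:0, 0, 1:] * fps_X * W0 ^ 2
           + fps_const (smult \<omega> [:0, 1:]) * fps_X * fps_cmap sub_y0 (Hof W0)
           + fps_const (smult (inverse \<omega>) [:0, 1:]) * fps_X * fps_cmap sub_x0 (Hof W0)
           + 1" using W0 unfolding \<Phi>_def .
      show "Hof W0 = fps_cmap as_x W0 * fps_cmap as_y W0
           + fps_const [:[:inverse \<omega>:]:] * fps_cmap divY (Hof W0)
           + fps_const [:[:\<omega>:]:] * fps_cmap divX (Hof W0)"
        using Hiff by blast
    qed
  next
    fix p assume hp: "case p of (W, H) \<Rightarrow> W =
             fps_const [:0, 0, 1:] * fps_X * W ^ 2
           + fps_const (smult \<omega> [:0, 1:]) * fps_X * fps_cmap sub_y0 H
           + fps_const (smult (inverse \<omega>) [:0, 1:]) * fps_X * fps_cmap sub_x0 H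
           + 1
         \<and> H =
             fps_cmap as_x W * fps_cmap as_y W
           + fps_const [:[:inverse \<omega>:]:] * fps_cmap divY H
           + fps_const [:[:\<omega>:]:] * fps_cmap divX H"
    obtain W H where p: "p = (W, H)" by (cases p)
    from hp[unfolded p prod.case] have e1: "W =
             fps_const [:0, 0, 1:] * fps_X * W ^ 2
           + fps_const (smult \<omega> [:0, 1:]) * fps_X * fps_cmap sub_y0 H
           + fps_const (smult (inverse \<omega>) [:0, 1:]) * fps_X * fps_cmap sub_x0 H
           + 1" and e2: "H =
             fps_cmap as_x W * fps_cmap as_y W
           + fps_const [:[:inverse \<omega>:]:] * fps_cmap divY H
           + fps_const [:[:\<omega>:]:] * fps_cmap divX H" by blast+
    have hH: "H = Hof W" using e2 Hiff by blast
    have "W = \<Phi> W" unfolding \<Phi>_def using e1 unfolding hH[symmetric] .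
    then have "W = W0" by (rule uq)
    then show "p = (W0, Hof W0)" using p hH by simp
  qed
qed

end
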